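(* Let $a,b,c\in\mathbb{R}$ with $a+c=b$, and let $\rho=\max\{|a|,|b|,|c|\}$ satisfy $0<\rho<24/35$. Let $D_\rho=\det\begin{pmatrix}2+a&1+b\\1+b&2+c\end{pmatrix}$ and let $M_\rho=\min\{Q_\rho(s,t):(s,t)\in\mathbb{Z}^2\setminus\{(0,0)\}\}$, where $Q_\rho(s,t)=(2+a)s^2+2(1+b)st+(2+c)t^2$. Then $D_\rho^{-1/2}M_\rho<2\cdot 3^{-1/2}$. *)

theory Defs
  imports Complex_Main
begin

definition Qform :: "real \<Rightarrow> real \<Rightarrow> real \<Rightarrow> int \<Rightarrow> int \<Rightarrow> real" where
  "Qform a b c s t = (2 + a) * (real_of_int s)^2 + 2 * (1 + b) * real_of_int s * real_of_int t
                      + (2 + c) * (real_of_int t)^2"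

definition Dform :: "real \<Rightarrow> real \<Rightarrow> real \<Rightarrow> real" where
  "Dform a b c = (2 + a) * (2 + c) - (1 + b)^2"

text \<open>Minimum of the form over nonzero integer vectors (the infimum is attained,
  as the form is positive definite under the hypotheses).\<close>
definition Mform :: "real \<Rightarrow> real \<Rightarrow> real \<Rightarrow> real" where
  "Mform a b c = Inf {Qform a b c s t | s t. (s, t) \<noteq> (0, 0)}"

end

theory Submission
  imports Defs
begin

lemma c1: fixes a c :: real assumes "a \<le> c" "2*a + c \<le> 0" "\<bar>a\<bar> < 24/35" "a \<noteq> 0 \<or> c \<noteq> 0"
  shows "7*a^2+4*a*c+4*c^2+12*a < 0"
proof -
  have "a < 0" using assms by auto
  have "(c-a)*(c+2*a) \<le> 0" using assms by (intro mult_nonneg_nonpos) auto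
  hence "4*c^2+4*a*c - 8*a^2 \<le> 0" by (simp add: algebra_simps power2_eq_square)
  moreover have "a*(5*a+4) < 0" using \<open>a<0\<close> assms(3) by (intro mult_neg_pos) auto
  ultimately show ?thesis by (simp add: algebra_simps power2_eq_square)
qed
lemma c3: fixes a c b :: real assumes "b = a + c" "2*a + c \<ge> 0" "a + 2*c \<ge> 0" "\<bar>b\<bar> < 24/35" "a \<noteq> 0 \<or> c \<noteq> 0"
  shows "7*b^2-4*a*c-12*b < 0"
proof -
  have "b > 0" using assms by auto
  have "(a+b)*(2*b-a) \<ge> 0" using assms by (intro mult_nonneg_nonneg) auto
  moreover have "b*(15*b-12) < 0" using \<open>b>0\<close> assms(4) by (intro mult_pos_neg) auto
  ultimately show ?thesis using assms(1) by (simp add: algebra_simps power2_eq_square)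
qed

lemma Q_nonneg: fixes a b c :: real assumes "2 + a > 0" "Dform a b c > 0"
  shows "Qform a b c s t \<ge> 0"
proof -
  have "(2+a) * Qform a b c s t = ((2+a)*s + (1+b)*t)^2 + Dform a b c * t^2"
    unfolding Qform_def Dform_def by (simp add: algebra_simps power2_eq_square)
  moreover have "((2+a)*s + (1+b)*t)^2 + Dform a b c * t^2 \<ge> 0" using assms by simp
  ultimately show ?thesis using assms(1) by (metis zero_le_mult_iff not_le)
qed

theorem mainTheorem10:
  fixes a b c :: real
  assumes "a + c = b"
    and "0 < Max {\<bar>a\<bar>, \<bar>b\<bar>, \<bar>c\<bar>}"
    and "Max {\<bar>a\<bar>, \<bar>b\<bar>, \<bar>c\<bar>} < 24 / 35"
  shows "Dform a b c powr (-1/2) * Mform a b c < 2 * 3 powr (-1/2)"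
proof -
  have ba: "\<bar>a\<bar> < 24/35" "\<bar>b\<bar> < 24/35" "\<bar>c\<bar> < 24/35" using assms(3) by auto
  have nz: "a \<noteq> 0 \<or> c \<noteq> 0" using assms(1,2) by auto
  have Dv: "Dform a b c = 3 - a^2 - a*c - c^2"
    unfolding Dform_def assms(1)[symmetric] by (simp add: algebra_simps power2_eq_square)
  have Dpos: "Dform a b c > 0"
  proof -
    have "a^2 < 1" "c^2 < 1" using ba by (auto simp: abs_square_less_1)
    moreover have "\<bar>a*c\<bar> < 1" proof -
      have "\<bar>a\<bar>*\<bar>c\<bar> \<le> 1*\<bar>c\<bar>" using ba by (intro mult_right_mono) auto
      thus ?thesis using ba by (simp add: abs_mult)
    qed
    ultimately show ?thesis unfolding Dv by linarith
  qed
  have a2: "2 + a > 0" using ba by auto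
  define S where "S = {Qform a b c s t | s t. (s, t) \<noteq> (0, 0)}"
  have bdd: "bdd_below S" unfolding S_def using Q_nonneg[OF a2 Dpos]
    by (intro bdd_belowI[of _ 0]) auto
  have "Mform a b c \<le> Qform a b c 1 0" unfolding Mform_def S_def[symmetric]
    by (rule cInf_lower[OF _ bdd]) (unfold S_def mem_Collect_eq, rule exI[of _ 1], rule exI[of _ 0], simp)
  hence M1: "Mform a b c \<le> 2 + a" by (simp add: Qform_def)
  have "Mform a b c \<le> Qform a b c 0 1" unfolding Mform_def S_def[symmetric]
    by (rule cInf_lower[OF _ bdd]) (unfold S_def mem_Collect_eq, rule exI[of _ 0], rule exI[of _ 1], simp)
  hence M2: "Mform a b c \<le> 2 + c" by (simp add: Qform_def)
  have "Mform a b c \<le> Qform a b c 1 (-1)" unfolding Mform_def S_def[symmetric]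
    by (rule cInf_lower[OF _ bdd]) (unfold S_def mem_Collect_eq, rule exI[of _ 1], rule exI[of _ "-1"], simp)
  hence M3: "Mform a b c \<le> 2 - b" using assms(1) by (simp add: Qform_def algebra_simps)
  define m where "m = min (min (2+a) (2+c)) (2-b)"
  have Mm: "Mform a b c \<le> m" using M1 M2 M3 unfolding m_def by simp
  have mpos: "m > 0" using ba unfolding m_def by auto
  have key: "3*m^2 < 4 * Dform a b c"
  proof -
    consider "m = 2+a" "a \<le> c" "2*a+c \<le> 0" | "m = 2+c" "c \<le> a" "2*c+a \<le> 0"
      | "m = 2-b" "2*a+c \<ge> 0" "a+2*c \<ge> 0" using assms(1) unfolding m_def by linarith
    then show ?thesis
    proof cases
      case 1
      have "7*a^2+4*a*c+4*c^2+12*a < 0" using c1[of a c] 1 ba nz by blast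
      thus ?thesis unfolding Dv 1(1) by (simp add: algebra_simps power2_eq_square)
    next
      case 2
      have "7*c^2+4*c*a+4*a^2+12*c < 0" using c1[of c a] 2 ba nz by (auto simp: add.commute)
      thus ?thesis unfolding Dv 2(1) by (simp add: algebra_simps power2_eq_square)
    next
      case 3
      have "7*b^2-4*a*c-12*b < 0" using c3[of b a c] 3 ba nz assms(1) by auto
      thus ?thesis unfolding Dv 3(1) using assms(1)[symmetric] by (simp add: algebra_simps power2_eq_square)
    qed
  qed
  have "sqrt 3 * m < 2 * sqrt (Dform a b c)"
  proof -
    have "(sqrt 3 * m)^2 < (2 * sqrt (Dform a b c))^2"
      using key Dpos by (simp add: power_mult_distrib)
    thus ?thesis using Dpos by (smt (verit) power_mono real_sqrt_ge_zero)
  qed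
  hence "m / sqrt (Dform a b c) < 2 / sqrt 3" using Dpos
    by (simp add: field_simps)
  moreover have "Mform a b c / sqrt (Dform a b c) \<le> m / sqrt (Dform a b c)"
    using Mm Dpos by (simp add: divide_right_mono)
  moreover have "Dform a b c powr (-1/2) = 1 / sqrt (Dform a b c)" using Dpos
    by (simp add: powr_minus_divide powr_half_sqrt)
  moreover have "(3::real) powr (-1/2) = 1 / sqrt 3"
    by (simp add: powr_minus_divide powr_half_sqrt)
  ultimately show ?thesis by simp
qed

end
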